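(* Under the assumptions of the semi-offline identification result, let $\tilde Q^t$ be a candidate Q-function, $\tilde V^{t-1}=\sum_{A'^t}\tilde Q^t\,\pi_\alpha(A'^t\mid\underline X'^{t-1},\underline A'^{t-1})$, and let $\rho^t_{Semi}$ be computed with a candidate propensity model $\hat\pi_\beta$ ($\rho^0_{Semi}=1$). Define the DRL estimator $$J_{DRL\text{-}Semi}=\hat{\mathbb{E}}_{n'}\Big[\rho^T_{Semi}C'+\sum_{t=1}^T\big(-\rho^t_{Semi}\tilde Q^t+\rho^{t-1}_{Semi}\tilde V^{t-1}\big)\Big].$$ Then $J_{DRL\text{-}Semi}$ is doubly robust: it is consistent for $J$ if either $\hat\pi_\beta$ is correctly specified ($\hat\pi_\beta(R\ge R'^t\mid X_o)=\pi_\beta(R\ge R'^t\mid X_o)$ for all $t$), or $\tilde Q^t$ equals the true semi-offline Q-function $Q^t_{Semi}$ for all $t$.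
   Context: Setting: full features $X_{(1)}$ (finitely valued), label $Y$, missingness $R\in\{0,1\}^{d_x}$ with mechanism $\pi_\beta$; MAR: $\pi_\beta(R\mid X_{(1)})=\pi_\beta(R\mid X_o)$ with $X_o$ always observed; no direct effect, consistency, no interference, static features. AFA policy $\pi_\alpha$ with actions in $\{1,\dots,d_x+1\}$ (acquire feature or stop at step $T$), histories $\underline X^t=(X^0,\dots,X^t)$, $\underline A^t=(A^1,\dots,A^t)$; $J=\mathbb{E}[C_{(\pi_\alpha)}]$ the expected misclassification cost under $\pi_\alpha$ with a fixed deterministic classifier. Semi-offline sampling distribution $p'$: $(X_{(1)},Y,R)\sim p$, actions from a blocked simulation policy $\pi'_{sim}(A'^t\mid\underline X'^{t-1},\underline A'^{t-1},R)$ (never acquires features with $R_i=0$; otherwise positive wherever $\pi_{sim}$ is; $\pi_{sim}$ satisfies off-policy positivity w.r.t. $\pi_\alpha$), revealed features $X'^t=X_{(1),A'^t}$, simulated cost $C'$; $\hat{\mathbb{E}}_{n'}$ is the empirical mean over i.i.d. simulated trajectories. Semi-offline positivity: if a trajectory has positive probability under $\pi_\alpha$ then $\pi_\beta(R\ge r'\mid x_o)>0$, $r'$ the indicator of acquired features. $R'^t$ indicator of features acquired by $\underline A'^t$, $\ge$ componentwise. Weights $\rho^t_{Semi}=\prod_{\tau=1}^t\frac{\pi_\alpha(A'^\tau\mid\underline X'^{\tau-1},\underline A'^{\tau-1})}{\pi'_{sim}(A'^\tau\mid\underline X'^{\tau-1},\underline A'^{\tau-1},R)}\cdot\frac{\mathbb{I}(R\ge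 R'^t)}{\hat\pi_\beta(R\ge R'^t\mid X_o)}$. True Q-function $Q^t_{Semi}=\mathbb{E}_{p'}[C'_{(\overline\pi^{t+1}_\alpha)}\mid\underline X'^{t-1},\underline A'^t,X_o]$, where $C'_{(\overline\pi^{t+1}_\alpha)}$ is the potential outcome of $C'$ had actions from step $t+1$ on followed $\pi_\alpha$. *)

theory Defs
  imports "HOL-Probability.Probability" "HOL-Probability.Product_PMF"
begin

(* A history of steps: each step records the action A^t (None = stop,
   Some i = acquire feature i) and the revealed value X^t (None for stop). *)
type_synonym ('f,'v) steps = "('f option \<times> 'v option) list"

definition reveal :: "('f \<Rightarrow> 'v) \<Rightarrow> 'f option \<Rightarrow> 'v option" where
  "reveal x a = map_option x a"

fun gen :: "('o \<Rightarrow> ('f,'v) steps \<Rightarrow> 'f option pmf) \<Rightarrow> ('f \<Rightarrow> 'v) \<Rightarrow> 'o \<Rightarrow> nat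
             \<Rightarrow> ('f,'v) steps \<Rightarrow> ('f,'v) steps pmf" where
  "gen pol x xo 0 hs = return_pmf hs"
| "gen pol x xo (Suc k) hs =
     bind_pmf (pol xo hs) (\<lambda>a. gen pol x xo k (hs @ [(a, reveal x a)]))"

definition acquired :: "('f,'v) steps \<Rightarrow> 'f set" where
  "acquired hs = {i. Some i \<in> fst ` set hs}"

definition allowed :: "'f set \<Rightarrow> 'f option \<Rightarrow> bool" where
  "allowed r a = (case a of None \<Rightarrow> True | Some i \<Rightarrow> i \<in> r)"

(* p: (X_o, X_(1), Y) ~ pXY, R ~ piB(. | X_o)   (MAR) *)
definition full_dist ::
  "('o \<times> ('f \<Rightarrow> 'v) \<times> 'y) pmf \<Rightarrow> ('o \<Rightarrow> 'f set pmf) \<Rightarrow> ('o \<times> ('f \<Rightarrow> 'v) \<times> 'y \<times> 'f set) pmf" where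
  "full_dist pXY piB =
     bind_pmf pXY (\<lambda>(xo, x, y). map_pmf (\<lambda>r. (xo, x, y, r)) (piB xo))"

definition semi_dist ::
  "('o \<times> ('f \<Rightarrow> 'v) \<times> 'y) pmf \<Rightarrow> ('o \<Rightarrow> 'f set pmf)
   \<Rightarrow> ('f set \<Rightarrow> 'o \<Rightarrow> ('f,'v) steps \<Rightarrow> 'f option pmf) \<Rightarrow> nat
   \<Rightarrow> (('o \<times> ('f \<Rightarrow> 'v) \<times> 'y \<times> 'f set) \<times> ('f,'v) steps) pmf" where
  "semi_dist pXY piB piSimB T =
     bind_pmf (full_dist pXY piB)
       (\<lambda>(xo, x, y, r). map_pmf (\<lambda>tr. ((xo, x, y, r), tr)) (gen (piSimB r) x xo T []))"

definition online_J ::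
  "('o \<times> ('f \<Rightarrow> 'v) \<times> 'y) pmf \<Rightarrow> ('o \<Rightarrow> ('f,'v) steps \<Rightarrow> 'f option pmf)
   \<Rightarrow> ('o \<Rightarrow> ('f,'v) steps \<Rightarrow> 'y \<Rightarrow> real) \<Rightarrow> nat \<Rightarrow> real" where
  "online_J pXY piA cost T =
     measure_pmf.expectation
       (bind_pmf pXY (\<lambda>(xo, x, y). map_pmf (\<lambda>tr. cost xo tr y) (gen piA x xo T [])))
       (\<lambda>c. c)"

definition rho ::
  "('o \<Rightarrow> ('f,'v) steps \<Rightarrow> 'f option pmf) \<Rightarrow> ('f set \<Rightarrow> 'o \<Rightarrow> ('f,'v) steps \<Rightarrow> 'f option pmf)
   \<Rightarrow> ('o \<Rightarrow> 'f set \<Rightarrow> real) \<Rightarrow> 'f set \<Rightarrow> 'o \<Rightarrow> ('f,'v) steps \<Rightarrow> nat \<Rightarrow> real" where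
  "rho piA piSimB piBhat r xo tr t =
     (if t = 0 then 1 else
        (\<Prod>\<tau><t. pmf (piA xo (take \<tau> tr)) (fst (tr ! \<tau>))
                 / pmf (piSimB r xo (take \<tau> tr)) (fst (tr ! \<tau>)))
        * (if acquired (take t tr) \<subseteq> r then 1 else 0)
        / piBhat xo (acquired (take t tr)))"

definition Vtilde ::
  "(nat \<Rightarrow> 'o \<Rightarrow> ('f,'v) steps \<Rightarrow> 'f option \<Rightarrow> real) \<Rightarrow> ('o \<Rightarrow> ('f,'v) steps \<Rightarrow> 'f option pmf)
   \<Rightarrow> nat \<Rightarrow> 'o \<Rightarrow> ('f,'v) steps \<Rightarrow> real" where
  "Vtilde Qt piA t xo h = (\<Sum>a\<in>UNIV. Qt t xo h a * pmf (piA xo h) a)"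

definition drl_summand ::
  "('o \<Rightarrow> ('f,'v) steps \<Rightarrow> 'f option pmf) \<Rightarrow> ('f set \<Rightarrow> 'o \<Rightarrow> ('f,'v) steps \<Rightarrow> 'f option pmf)
   \<Rightarrow> ('o \<Rightarrow> 'f set \<Rightarrow> real) \<Rightarrow> (nat \<Rightarrow> 'o \<Rightarrow> ('f,'v) steps \<Rightarrow> 'f option \<Rightarrow> real)
   \<Rightarrow> ('o \<Rightarrow> ('f,'v) steps \<Rightarrow> 'y \<Rightarrow> real) \<Rightarrow> nat
   \<Rightarrow> ('o \<times> ('f \<Rightarrow> 'v) \<times> 'y \<times> 'f set) \<times> ('f,'v) steps \<Rightarrow> real" where
  "drl_summand piA piSimB piBhat Qt cost T \<omega> =
     (case \<omega> of ((xo, x, y, r), tr) \<Rightarrow>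
        rho piA piSimB piBhat r xo tr T * cost xo tr y
        + (\<Sum>t\<in>{1..T}. - rho piA piSimB piBhat r xo tr t * Qt t xo (take (t - 1) tr) (fst (tr ! (t - 1)))
                        + rho piA piSimB piBhat r xo tr (t - 1) * Vtilde Qt piA t xo (take (t - 1) tr)))"

definition J_DRL ::
  "('o \<Rightarrow> ('f,'v) steps \<Rightarrow> 'f option pmf) \<Rightarrow> ('f set \<Rightarrow> 'o \<Rightarrow> ('f,'v) steps \<Rightarrow> 'f option pmf)
   \<Rightarrow> ('o \<Rightarrow> 'f set \<Rightarrow> real) \<Rightarrow> (nat \<Rightarrow> 'o \<Rightarrow> ('f,'v) steps \<Rightarrow> 'f option \<Rightarrow> real)
   \<Rightarrow> ('o \<Rightarrow> ('f,'v) steps \<Rightarrow> 'y \<Rightarrow> real) \<Rightarrow> nat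
   \<Rightarrow> nat \<Rightarrow> (nat \<Rightarrow> ('o \<times> ('f \<Rightarrow> 'v) \<times> 'y \<times> 'f set) \<times> ('f,'v) steps) \<Rightarrow> real" where
  "J_DRL piA piSimB piBhat Qt cost T n \<omega> =
     (\<Sum>i<n. drl_summand piA piSimB piBhat Qt cost T (\<omega> i)) / real n"

definition prefix_event ::
  "nat \<Rightarrow> 'o \<Rightarrow> ('f,'v) steps \<Rightarrow> 'f option
   \<Rightarrow> (('o \<times> ('f \<Rightarrow> 'v) \<times> 'y \<times> 'f set) \<times> ('f,'v) steps) set" where
  "prefix_event t xo h a =
     {((xo', x, y, r), tr). xo' = xo \<and> take (t - 1) tr = h \<and> fst (tr ! (t - 1)) = a}"

(* True Q-function Q^t_Semi = E_{p'}[ C'_(pibar^{t+1}_alpha) | X'^{<t}, A'^{\<le>t}, X_o ]: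
   the potential outcome keeps A'^1..A'^t, reveals X'^t = X_(1),A'^t and then
   follows piA for the remaining T - t steps (features from X_(1)). *)
definition Q_true ::
  "('o \<times> ('f \<Rightarrow> 'v) \<times> 'y) pmf \<Rightarrow> ('o \<Rightarrow> 'f set pmf)
   \<Rightarrow> ('f set \<Rightarrow> 'o \<Rightarrow> ('f,'v) steps \<Rightarrow> 'f option pmf) \<Rightarrow> ('o \<Rightarrow> ('f,'v) steps \<Rightarrow> 'f option pmf)
   \<Rightarrow> ('o \<Rightarrow> ('f,'v) steps \<Rightarrow> 'y \<Rightarrow> real) \<Rightarrow> nat
   \<Rightarrow> nat \<Rightarrow> 'o \<Rightarrow> ('f,'v) steps \<Rightarrow> 'f option \<Rightarrow> real" where
  "Q_true pXY piB piSimB piA cost T t xo h a =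
     measure_pmf.expectation
       (cond_pmf (semi_dist pXY piB piSimB T) (prefix_event t xo h a))
       (\<lambda>((xo', x, y, r), tr).
          measure_pmf.expectation (gen piA x xo (T - t) (h @ [(a, reveal x a)]))
            (\<lambda>tr'. cost xo tr' y))"

end

theory Submission
  imports Defs
begin


definition pp :: "('o \<Rightarrow> ('f,'v) steps \<Rightarrow> 'f option pmf) \<Rightarrow> 'o \<Rightarrow> ('f,'v) steps \<Rightarrow> real" where
  "pp pol xo h = (\<Prod>\<tau><length h. pmf (pol xo (take \<tau> h)) (fst (h ! \<tau>)))"

definition consist :: "('f \<Rightarrow> 'v) \<Rightarrow> ('f,'v) steps \<Rightarrow> bool" where
  "consist x h = (\<forall>\<tau><length h. snd (h ! \<tau>) = reveal x (fst (h ! \<tau>)))"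

definition wt :: "('o \<Rightarrow> ('f,'v) steps \<Rightarrow> 'f option pmf) \<Rightarrow> ('f \<Rightarrow> 'v) \<Rightarrow> 'o \<Rightarrow> ('f,'v) steps \<Rightarrow> real" where
  "wt pol x xo h = (if consist x h then pp pol xo h else 0)"

lemma pp_snoc: "pp pol xo (h @ [s]) = pp pol xo h * pmf (pol xo h) (fst s)"
  unfolding pp_def by (simp add: nth_append take_append)

lemma pp_Nil [simp]: "pp pol xo [] = 1" by (simp add: pp_def)

lemma consist_snoc: "consist x (h @ [s]) = (consist x h \<and> snd s = reveal x (fst s))"
  unfolding consist_def by (auto simp: nth_append less_Suc_eq)

lemma consist_Nil [simp]: "consist x []" by (simp add: consist_def)

lemma wt_snoc: "wt pol x xo (h @ [s]) = wt pol x xo h * pmf (pol xo h) (fst s) * (if snd s = reveal x (fst s) then 1 else 0)"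
  by (simp add: wt_def pp_snoc consist_snoc)

lemma pp_nonneg: "pp pol xo h \<ge> 0" unfolding pp_def by (intro prod_nonneg) auto
lemma wt_nonneg: "wt pol x xo h \<ge> 0" unfolding wt_def using pp_nonneg by auto

lemma gen_add: "gen pol x xo (m + k) hs = bind_pmf (gen pol x xo m hs) (gen pol x xo k)"
  by (induction m arbitrary: hs) (simp_all add: bind_assoc_pmf bind_return_pmf)

lemma gen_Suc': "gen pol x xo (Suc m) hs =
   bind_pmf (gen pol x xo m hs) (\<lambda>h. map_pmf (\<lambda>a. h @ [(a, reveal x a)]) (pol xo h))"
proof -
  have "gen pol x xo (Suc m) hs = bind_pmf (gen pol x xo m hs) (gen pol x xo (Suc 0))"
    using gen_add[of pol x xo m "Suc 0" hs] by (simp del: gen.simps)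
  also have "gen pol x xo (Suc 0) = (\<lambda>h. map_pmf (\<lambda>a. h @ [(a, reveal x a)]) (pol xo h))"
    by (simp add: map_pmf_def fun_eq_iff)
  finally show ?thesis .
qed

lemma gen_supp: "tr \<in> set_pmf (gen pol x xo k hs) \<Longrightarrow> length tr = length hs + k \<and> take (length hs) tr = hs"
proof (induction k arbitrary: hs)
  case 0 thus ?case by simp
next
  case (Suc k)
  then obtain a where a: "tr \<in> set_pmf (gen pol x xo k (hs @ [(a, reveal x a)]))" by auto
  from Suc.IH[OF a] show ?case by (auto simp: min_def dest: arg_cong[of _ _ "take (length hs)"])
qed

lemma finite_L: "finite {h :: ('f::finite, 'v::finite) steps. length h = k}"
  using finite_lists_length_eq[of "UNIV :: ('f option \<times> 'v option) set" k] by simp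

lemma gen_finite: "finite (set_pmf (gen pol x xo k (hs :: ('f::finite, 'v::finite) steps)))"
  by (rule finite_subset[OF _ finite_L[of "length hs + k"]]) (auto dest: gen_supp)

lemma L_Suc: "(\<Sum>h\<in>{h :: ('f::finite, 'v::finite) steps. length h = Suc k}. F h) =
   (\<Sum>h\<in>{h. length h = k}. \<Sum>s\<in>UNIV. F (h @ [s]))"
proof -
  have bij: "bij_betw (\<lambda>(h, s). h @ [s]) ({h. length h = k} \<times> UNIV) {h :: ('f, 'v) steps. length h = Suc k}"
  proof (rule bij_betwI[where g = "\<lambda>h. (butlast h, last h)"])
    show "(\<lambda>h. (butlast h, last h)) \<in> {h :: ('f, 'v) steps. length h = Suc k} \<rightarrow> {h. length h = k} \<times> UNIV"
      by auto
    fix h :: "('f,'v) steps" assume "h \<in> {h. length h = Suc k}"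
    thus "(case (butlast h, last h) of (h, s) \<Rightarrow> h @ [s]) = h"
      by (cases h rule: rev_cases) auto
  qed auto
  have "(\<Sum>h\<in>{h :: ('f, 'v) steps. length h = Suc k}. F h) = (\<Sum>p\<in>{h. length h = k} \<times> UNIV. F (case p of (h, s) \<Rightarrow> h @ [s]))"
    by (rule sum.reindex_bij_betw[OF bij, symmetric])
  also have "\<dots> = (\<Sum>h\<in>{h. length h = k}. \<Sum>s\<in>UNIV. F (h @ [s]))"
    by (subst sum.cartesian_product) (simp add: split_def)
  finally show ?thesis .
qed

lemma expectation_finite_type:
  fixes p :: "'a::finite pmf" and f :: "'a \<Rightarrow> real"
  shows "measure_pmf.expectation p f = (\<Sum>a\<in>UNIV. pmf p a * f a)"
  by (subst integral_measure_pmf[of UNIV]) auto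

lemma sum_reveal:
  fixes F :: "'f::finite option \<Rightarrow> 'v::finite option \<Rightarrow> real"
  shows "(\<Sum>s\<in>(UNIV :: ('f option \<times> 'v option) set). (if snd s = reveal x (fst s) then 1 else 0) * F (fst s) (snd s))
       = (\<Sum>a\<in>UNIV. F a (reveal x a))"
proof -
  have "(\<Sum>s\<in>(UNIV :: ('f option \<times> 'v option) set). (if snd s = reveal x (fst s) then 1 else 0) * F (fst s) (snd s))
      = (\<Sum>a\<in>UNIV. \<Sum>v\<in>UNIV. (if v = reveal x a then 1 else 0) * F a v)"
  proof -
    have "(\<Sum>a\<in>UNIV. \<Sum>v\<in>UNIV. (if v = reveal x a then 1 else 0) * F a v)
       = (\<Sum>s\<in>UNIV \<times> UNIV. (if snd s = reveal x (fst s) then 1 else 0) * F (fst s) (snd s))"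
      by (subst sum.cartesian_product) (simp add: split_def)
    thus ?thesis by simp
  qed
  also have "\<dots> = (\<Sum>a\<in>UNIV. F a (reveal x a))"
  proof (intro sum.cong refl)
    fix a
    have "(\<Sum>v\<in>UNIV. (if v = reveal x a then 1 else 0) * F a v) = (\<Sum>v\<in>UNIV. if v = reveal x a then F a v else 0)"
      by (intro sum.cong) auto
    thus "(\<Sum>v\<in>UNIV. (if v = reveal x a then 1 else 0) * F a v) = F a (reveal x a)"
      by (simp add: sum.delta')
  qed
  finally show ?thesis .
qed

lemma gen_expect:
  fixes g :: "('f::finite, 'v::finite) steps \<Rightarrow> real"
  shows "measure_pmf.expectation (gen pol x xo k []) g = (\<Sum>h\<in>{h. length h = k}. wt pol x xo h * g h)"
proof (induction k arbitrary: g)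
  case 0
  have "{h :: ('f,'v) steps. length h = 0} = {[]}" by auto
  thus ?case by (simp add: wt_def)
next
  case (Suc k)
  have "measure_pmf.expectation (gen pol x xo (Suc k) []) g =
        measure_pmf.expectation (gen pol x xo k []) (\<lambda>h. measure_pmf.expectation (map_pmf (\<lambda>a. h @ [(a, reveal x a)]) (pol xo h)) g)"
    unfolding gen_Suc'
    by (subst pmf_expectation_bind[of "set_pmf (gen pol x xo k [])"])
       (auto simp: gen_finite integral_measure_pmf[of "set_pmf (gen pol x xo k [])"] intro!: sum.cong)
  also have "\<dots> = (\<Sum>h\<in>{h. length h = k}. wt pol x xo h * (\<Sum>a\<in>UNIV. pmf (pol xo h) a * g (h @ [(a, reveal x a)])))"
    by (simp add: Suc expectation_finite_type)
  also have "\<dots> = (\<Sum>h\<in>{h. length h = Suc k}. wt pol x xo h * g h)"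
    unfolding L_Suc wt_snoc
  proof (intro sum.cong refl)
    fix h :: "('f,'v) steps"
    have "(\<Sum>s\<in>UNIV. wt pol x xo h * pmf (pol xo h) (fst s) * (if snd s = reveal x (fst s) then 1 else 0) * g (h @ [s]))
        = wt pol x xo h * (\<Sum>s\<in>UNIV. (if snd s = reveal x (fst s) then 1 else 0) * (\<lambda>a v. pmf (pol xo h) a * g (h @ [(a, v)])) (fst s) (snd s))"
      by (simp add: sum_distrib_left mult_ac)
    also have "\<dots> = wt pol x xo h * (\<Sum>a\<in>UNIV. pmf (pol xo h) a * g (h @ [(a, reveal x a)]))"
      by (subst sum_reveal) simp
    finally show "wt pol x xo h * (\<Sum>a\<in>UNIV. pmf (pol xo h) a * g (h @ [(a, reveal x a)])) =
        (\<Sum>s\<in>UNIV. wt pol x xo h * pmf (pol xo h) (fst s) * (if snd s = reveal x (fst s) then 1 else 0) * g (h @ [s]))"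
      by simp
  qed
  finally show ?case .
qed

lemma gen_marg:
  assumes "t \<le> T"
  shows "map_pmf (take t) (gen pol x xo T []) = gen pol x xo t []"
proof -
  obtain k where T: "T = t + k" using assms le_iff_add by blast
  have "map_pmf (take t) (gen pol x xo T []) = bind_pmf (gen pol x xo t []) (\<lambda>h. map_pmf (take t) (gen pol x xo k h))"
    unfolding T gen_add map_bind_pmf ..
  also have "\<dots> = bind_pmf (gen pol x xo t []) return_pmf"
  proof (intro bind_pmf_cong refl)
    fix h assume h: "h \<in> set_pmf (gen pol x xo t [])"
    hence lh: "length h = t" using gen_supp by fastforce
    have "map_pmf (take t) (gen pol x xo k h) = map_pmf (\<lambda>_. h) (gen pol x xo k h)"
      by (intro map_pmf_cong refl) (use gen_supp[of _ pol x xo k h] lh in auto)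
    thus "map_pmf (take t) (gen pol x xo k h) = return_pmf h" by (simp add: map_pmf_const)
  qed
  finally show ?thesis by (simp add: bind_return_pmf')
qed

lemma gen_in_supp:
  assumes "length h = k" "consist x h" "pp pol xo h > 0"
  shows "h \<in> set_pmf (gen pol x xo k [])"
  using assms
proof (induction k arbitrary: h)
  case 0 thus ?case by simp
next
  case (Suc k)
  then obtain h0 s where h: "h = h0 @ [s]" by (cases h rule: rev_cases) auto
  have l: "length h0 = k" using Suc h by simp
  have c: "consist x h0" "snd s = reveal x (fst s)" using Suc(3) h by (auto simp: consist_snoc)
  have p: "pp pol xo h0 > 0" "pmf (pol xo h0) (fst s) > 0"
    using Suc(4) h pp_nonneg[of pol xo h0] by (auto simp: pp_snoc zero_less_mult_iff)
  have "h0 \<in> set_pmf (gen pol x xo k [])" by (rule Suc.IH[OF l c(1) p(1)])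
  moreover have "fst s \<in> set_pmf (pol xo h0)" using p(2) by (simp add: set_pmf_iff)
  ultimately show ?case unfolding gen_Suc' h using c(2)
    by (auto intro!: bexI[of _ h0] bexI[of _ "fst s"] simp: prod_eq_iff)
qed

lemma gen_expect_Suc:
  fixes g :: "('f::finite, 'v::finite) steps \<Rightarrow> real"
  shows "measure_pmf.expectation (gen pol x xo (Suc k) []) g =
    measure_pmf.expectation (gen pol x xo k []) (\<lambda>h. \<Sum>a\<in>UNIV. pmf (pol xo h) a * g (h @ [(a, reveal x a)]))"
  unfolding gen_Suc'
  by (subst pmf_expectation_bind[of "set_pmf (gen pol x xo k [])"])
     (auto simp: gen_finite integral_measure_pmf[of "set_pmf (gen pol x xo k [])"] expectation_finite_type
           intro!: sum.cong)

lemma sum_rearr: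
  fixes f :: "'a \<Rightarrow> 'c \<Rightarrow> real"
  shows "(\<Sum>x\<in>X. \<Sum>r\<in>R. \<Sum>h\<in>H. f x h * g r h) = (\<Sum>h\<in>H. (\<Sum>r\<in>R. g r h) * (\<Sum>x\<in>X. f x h))"
proof -
  have "(\<Sum>x\<in>X. \<Sum>r\<in>R. \<Sum>h\<in>H. f x h * g r h) = (\<Sum>x\<in>X. \<Sum>h\<in>H. \<Sum>r\<in>R. f x h * g r h)"
    by (intro sum.cong refl) (rule sum.swap)
  also have "\<dots> = (\<Sum>h\<in>H. \<Sum>x\<in>X. \<Sum>r\<in>R. f x h * g r h)" by (rule sum.swap)
  also have "\<dots> = (\<Sum>h\<in>H. \<Sum>r\<in>R. \<Sum>x\<in>X. f x h * g r h)"
    by (intro sum.cong refl) (rule sum.swap)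
  also have "\<dots> = (\<Sum>h\<in>H. (\<Sum>r\<in>R. g r h) * (\<Sum>x\<in>X. f x h))"
    by (simp add: sum_distrib_left sum_distrib_right mult_ac)
  finally show ?thesis .
qed

lemma sum_rearr2:
  fixes f :: "'a \<Rightarrow> 'c \<Rightarrow> 'd \<Rightarrow> real"
  shows "(\<Sum>x\<in>X. \<Sum>r\<in>R. \<Sum>h\<in>H. \<Sum>a\<in>U. f x h a * g r h a) = (\<Sum>h\<in>H. \<Sum>a\<in>U. (\<Sum>r\<in>R. g r h a) * (\<Sum>x\<in>X. f x h a))"
proof -
  have "(\<Sum>x\<in>X. \<Sum>r\<in>R. \<Sum>h\<in>H. \<Sum>a\<in>U. f x h a * g r h a) = (\<Sum>x\<in>X. \<Sum>r\<in>R. \<Sum>p\<in>H \<times> U. f x (fst p) (snd p) * g r (fst p) (snd p))"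
    by (intro sum.cong refl) (simp add: sum.cartesian_product split_def)
  also have "\<dots> = (\<Sum>p\<in>H \<times> U. (\<Sum>r\<in>R. g r (fst p) (snd p)) * (\<Sum>x\<in>X. f x (fst p) (snd p)))"
    by (rule sum_rearr)
  also have "\<dots> = (\<Sum>h\<in>H. \<Sum>a\<in>U. (\<Sum>r\<in>R. g r h a) * (\<Sum>x\<in>X. f x h a))"
    by (simp add: sum.cartesian_product split_def)
  finally show ?thesis .
qed

lemma cond_expect:
  fixes p :: "'a pmf" and f :: "'a \<Rightarrow> real"
  assumes fin: "finite (set_pmf p)" and pos: "measure_pmf.prob p s > 0"
  shows "measure_pmf.expectation (cond_pmf p s) f = measure_pmf.expectation p (\<lambda>w. indicator s w * f w) / measure_pmf.prob p s"
proof -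
  have ne: "set_pmf p \<inter> s \<noteq> {}" using pos measure_pmf_zero_iff[of p s] by auto
  have "measure_pmf.expectation (cond_pmf p s) f = (\<Sum>w\<in>set_pmf p. pmf (cond_pmf p s) w * f w)"
    using ne by (subst integral_measure_pmf[OF fin]) auto
  also have "\<dots> = (\<Sum>w\<in>set_pmf p. pmf p w * (indicator s w * f w)) / measure_pmf.prob p s"
    by (simp add: pmf_cond[OF ne] sum_divide_distrib indicator_def; intro sum.cong; auto)
  also have "(\<Sum>w\<in>set_pmf p. pmf p w * (indicator s w * f w)) = measure_pmf.expectation p (\<lambda>w. indicator s w * f w)"
    by (subst integral_measure_pmf[OF fin]) auto
  finally show ?thesis .
qed

lemma prob_finite_type:
  fixes p :: "'a::finite pmf"
  shows "measure_pmf.prob p A = (\<Sum>a\<in>UNIV. pmf p a * (if a \<in> A then 1 else 0))"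
proof -
  have "measure_pmf.prob p A = (\<Sum>a\<in>A. pmf p a)" by (rule measure_measure_pmf_finite) simp
  also have "\<dots> = (\<Sum>a\<in>UNIV. pmf p a * (if a \<in> A then 1 else 0))"
    by (simp add: if_distrib sum.If_cases Int_absorb1)
  finally show ?thesis .
qed

lemma sum_pair_UNIV:
  "(\<Sum>z\<in>(UNIV::('a::finite \<times> 'b::finite) set). F z) = (\<Sum>a\<in>UNIV. \<Sum>b\<in>UNIV. F (a, b))"
proof -
  have "(\<Sum>a\<in>UNIV. \<Sum>b\<in>UNIV. F (a, b)) = (\<Sum>z\<in>UNIV \<times> UNIV. F z)"
    by (subst sum.cartesian_product) (simp add: split_def)
  thus ?thesis by simp
qed

locale drl_loc =
  fixes pXY :: "('o::finite \<times> ('f::finite \<Rightarrow> 'v::finite) \<times> 'y::finite) pmf"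
    and piB :: "'o \<Rightarrow> 'f set pmf"
    and piA piSim :: "'o \<Rightarrow> ('f,'v) steps \<Rightarrow> 'f option pmf"
    and piSimB :: "'f set \<Rightarrow> 'o \<Rightarrow> ('f,'v) steps \<Rightarrow> 'f option pmf"
    and piBhat :: "'o \<Rightarrow> 'f set \<Rightarrow> real"
    and Qt :: "nat \<Rightarrow> 'o \<Rightarrow> ('f,'v) steps \<Rightarrow> 'f option \<Rightarrow> real"
    and cost :: "'o \<Rightarrow> ('f,'v) steps \<Rightarrow> 'y \<Rightarrow> real"
    and T :: nat
  assumes blocked: "\<forall>r xo h i. pmf (piSimB r xo h) (Some i) > 0 \<longrightarrow> i \<in> r"
    and blocked_pos: "\<forall>r xo h a. pmf (piSim xo h) a > 0 \<and> allowed r a \<longrightarrow> pmf (piSimB r xo h) a > 0"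
    and offpolicy_pos: "\<forall>xo h a. pmf (piA xo h) a > 0 \<longrightarrow> pmf (piSim xo h) a > 0"
    and semi_offline_pos: "\<forall>xo x y tr. (xo, x, y) \<in> set_pmf pXY \<and> tr \<in> set_pmf (gen piA x xo T [])
                 \<longrightarrow> measure_pmf.prob (piB xo) {r. acquired tr \<subseteq> r} > 0"
begin

abbreviation "D \<equiv> semi_dist pXY piB piSimB T"

lemma D_eq: "D = bind_pmf pXY (\<lambda>(xo, x, y). bind_pmf (piB xo) (\<lambda>r.
       map_pmf (\<lambda>tr. ((xo, x, y, r), tr)) (gen (piSimB r) x xo T [])))"
  unfolding semi_dist_def full_dist_def
  by (simp add: bind_assoc_pmf bind_map_pmf split_def)

lemma D_finite: "finite (set_pmf D)"
  unfolding D_eq by (auto simp: gen_finite)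

lemma D_supp: "((xo, x, y, r), tr) \<in> set_pmf D \<Longrightarrow> length tr = T \<and> (xo, x, y) \<in> set_pmf pXY"
proof -
  assume "((xo, x, y, r), tr) \<in> set_pmf D"
  then obtain r' where "(xo, x, y) \<in> set_pmf pXY" "tr \<in> set_pmf (gen (piSimB r') x xo T [])"
    unfolding D_eq by auto
  with gen_supp[of tr "piSimB r'" x xo T "[]"] show ?thesis by simp
qed

lemma integrable_D [simp, intro]: "integrable (measure_pmf D) (f :: _ \<Rightarrow> real)"
  by (rule integrable_measure_pmf_finite[OF D_finite])

lemma ED:
  "measure_pmf.expectation D G = (\<Sum>xo\<in>UNIV. \<Sum>xy\<in>UNIV. \<Sum>r\<in>UNIV. pmf pXY (xo, xy) * pmf (piB xo) r *
      measure_pmf.expectation (gen (piSimB r) (fst xy) xo T []) (\<lambda>tr. G ((xo, fst xy, snd xy, r), tr)))"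
proof -
  have "measure_pmf.expectation D G = (\<Sum>z\<in>UNIV. pmf pXY z * (\<Sum>r\<in>UNIV. pmf (piB (fst z)) r *
      measure_pmf.expectation (gen (piSimB r) (fst (snd z)) (fst z) T []) (\<lambda>tr. G ((fst z, fst (snd z), snd (snd z), r), tr))))"
    unfolding D_eq
    by (subst pmf_expectation_bind[of UNIV])
       (auto simp: gen_finite split_def pmf_expectation_bind[of UNIV] intro!: sum.cong)
  also have "\<dots> = (\<Sum>xo\<in>UNIV. \<Sum>xy\<in>UNIV. \<Sum>r\<in>UNIV. pmf pXY (xo, xy) * pmf (piB xo) r *
      measure_pmf.expectation (gen (piSimB r) (fst xy) xo T []) (\<lambda>tr. G ((xo, fst xy, snd xy, r), tr)))"
    by (subst sum_pair_UNIV) (simp add: sum_distrib_left mult_ac)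
  finally show ?thesis .
qed


definition N :: "'o \<Rightarrow> ('f,'v) steps \<Rightarrow> (('f \<Rightarrow> 'v) \<times> 'y \<Rightarrow> real) \<Rightarrow> real" where
  "N xo h \<psi> = (\<Sum>xy\<in>UNIV. pmf pXY (xo, xy) * (if consist (fst xy) h then 1 else 0) * \<psi> xy)"

definition Z :: "'o \<Rightarrow> ('f,'v) steps \<Rightarrow> real" where
  "Z xo h = N xo h (\<lambda>_. 1)"

lemma N_const: "N xo h (\<lambda>_. c) = Z xo h * c"
  unfolding N_def Z_def by (simp add: sum_distrib_right)

lemma Z_nonneg: "Z xo h \<ge> 0"
  unfolding Z_def N_def by (intro sum_nonneg) auto

lemma Z_zero: "Z xo h = 0 \<Longrightarrow> N xo h \<psi> = 0"
proof -
  assume z: "Z xo h = 0"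
  have "\<forall>xy\<in>UNIV. pmf pXY (xo, xy) * (if consist (fst xy) h then 1 else 0) = 0"
    using z sum_nonneg_eq_0_iff[of UNIV "\<lambda>xy. pmf pXY (xo, xy) * (if consist (fst xy) h then 1 else 0)"]
    unfolding Z_def N_def by simp
  hence h0: "pmf pXY (xo, xy) * (if consist (fst xy) h then 1 else 0) = 0" for xy by blast
  show ?thesis unfolding N_def by (intro sum.neutral ballI) (simp add: h0)
qed

lemma ED_lvl:
  assumes t: "t \<le> T" and F: "\<And>xo x y r tr. length tr = T \<Longrightarrow> F ((xo, x, y, r), tr) = G xo x y r (take t tr)"
  shows "measure_pmf.expectation D F = (\<Sum>xo\<in>UNIV. \<Sum>xy\<in>UNIV. \<Sum>r\<in>UNIV. pmf pXY (xo, xy) * pmf (piB xo) r *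
      measure_pmf.expectation (gen (piSimB r) (fst xy) xo t []) (G xo (fst xy) (snd xy) r))"
  unfolding ED
proof (intro sum.cong refl arg_cong2[where f = "(*)"])
  fix xo xy r
  have "measure_pmf.expectation (gen (piSimB r) (fst xy) xo T []) (\<lambda>tr. F ((xo, fst xy, snd xy, r), tr))
      = measure_pmf.expectation (gen (piSimB r) (fst xy) xo T []) (\<lambda>tr. G xo (fst xy) (snd xy) r (take t tr))"
    by (intro integral_cong_AE AE_pmfI) (auto simp: F dest: gen_supp)
  also have "\<dots> = measure_pmf.expectation (map_pmf (take t) (gen (piSimB r) (fst xy) xo T [])) (G xo (fst xy) (snd xy) r)"
    by simp
  also have "\<dots> = measure_pmf.expectation (gen (piSimB r) (fst xy) xo t []) (G xo (fst xy) (snd xy) r)"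
    by (simp add: gen_marg[OF t])
  finally show "measure_pmf.expectation (gen (piSimB r) (fst xy) xo T []) (\<lambda>tr. F ((xo, fst xy, snd xy, r), tr))
      = measure_pmf.expectation (gen (piSimB r) (fst xy) xo t []) (G xo (fst xy) (snd xy) r)" .
qed

lemma LV:
  assumes t: "t \<le> T" and F: "\<And>xo x y r tr. length tr = T \<Longrightarrow> F ((xo, x, y, r), tr) = G xo r (take t tr) * \<Psi> xo x y (take t tr)"
  shows "measure_pmf.expectation D F = (\<Sum>xo\<in>UNIV. \<Sum>h\<in>{h. length h = t}.
     (\<Sum>r\<in>UNIV. pmf (piB xo) r * pp (piSimB r) xo h * G xo r h) * N xo h (\<lambda>xy. \<Psi> xo (fst xy) (snd xy) h))"
proof -
  have "measure_pmf.expectation D F = (\<Sum>xo\<in>UNIV. \<Sum>xy\<in>UNIV. \<Sum>r\<in>UNIV. \<Sum>h\<in>{h. length h = t}.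
       (pmf pXY (xo, xy) * (if consist (fst xy) h then 1 else 0) * \<Psi> xo (fst xy) (snd xy) h) *
       (pmf (piB xo) r * pp (piSimB r) xo h * G xo r h))"
    by (subst ED_lvl[OF t, of F "\<lambda>xo x y r h. G xo r h * \<Psi> xo x y h"])
       (auto simp: F gen_expect sum_distrib_left wt_def mult_ac intro!: sum.cong)
  also have "\<dots> = (\<Sum>xo\<in>UNIV. \<Sum>h\<in>{h. length h = t}.
     (\<Sum>r\<in>UNIV. pmf (piB xo) r * pp (piSimB r) xo h * G xo r h) * N xo h (\<lambda>xy. \<Psi> xo (fst xy) (snd xy) h))"
    unfolding N_def by (intro sum.cong refl) (rule sum_rearr)
  finally show ?thesis .
qed

lemma CIS:
  assumes t1: "1 \<le> t" and t: "t \<le> T"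
    and F: "\<And>xo x y r tr. length tr = T \<Longrightarrow> F ((xo, x, y, r), tr) = G xo r (take (t - 1) tr) (fst (tr ! (t - 1))) * \<Psi> xo x y (take t tr)"
  shows "measure_pmf.expectation D F = (\<Sum>xo\<in>UNIV. \<Sum>h\<in>{h. length h = t - 1}. \<Sum>a\<in>UNIV.
     (\<Sum>r\<in>UNIV. pmf (piB xo) r * pp (piSimB r) xo h * pmf (piSimB r xo h) a * G xo r h a) *
      N xo h (\<lambda>xy. \<Psi> xo (fst xy) (snd xy) (h @ [(a, reveal (fst xy) a)])))"
proof -
  obtain k where tk: "t = Suc k" using t1 by (cases t) auto
  have G': "F ((xo, x, y, r), tr) = G xo r (take (t - 1) (take t tr)) (fst ((take t tr) ! (t - 1))) * \<Psi> xo x y (take t tr)"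
    if "length tr = T" for xo x y r tr using that t tk by (simp add: F)
  have "measure_pmf.expectation D F = (\<Sum>xo\<in>UNIV. \<Sum>xy\<in>UNIV. \<Sum>r\<in>UNIV. \<Sum>h\<in>{h. length h = k}. \<Sum>a\<in>UNIV.
       (pmf pXY (xo, xy) * (if consist (fst xy) h then 1 else 0) * \<Psi> xo (fst xy) (snd xy) (h @ [(a, reveal (fst xy) a)])) *
       (pmf (piB xo) r * pp (piSimB r) xo h * pmf (piSimB r xo h) a * G xo r h a))"
    apply (subst ED_lvl[OF t, of F "\<lambda>xo x y r h. G xo r (take (t - 1) h) (fst (h ! (t - 1))) * \<Psi> xo x y h"])
     apply (simp add: G')
    apply (simp only: tk)
    apply (subst gen_expect_Suc)
    apply (subst gen_expect)
    apply (intro sum.cong refl)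
    apply (auto simp: sum_distrib_left wt_def mult_ac nth_append intro!: sum.cong)
    done
  also have "\<dots> = (\<Sum>xo\<in>UNIV. \<Sum>h\<in>{h. length h = t - 1}. \<Sum>a\<in>UNIV.
     (\<Sum>r\<in>UNIV. pmf (piB xo) r * pp (piSimB r) xo h * pmf (piSimB r xo h) a * G xo r h a) *
      N xo h (\<lambda>xy. \<Psi> xo (fst xy) (snd xy) (h @ [(a, reveal (fst xy) a)])))"
    unfolding N_def tk by (intro sum.cong refl) (simp only: diff_Suc_1 sum_rearr2)
  finally show ?thesis .
qed


definition kap :: "'o \<Rightarrow> ('f,'v) steps \<Rightarrow> 'f option \<Rightarrow> real" where
  "kap xo h a = (\<Sum>r\<in>UNIV. pmf (piB xo) r * pp (piSimB r) xo h * pmf (piSimB r xo h) a)"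

definition phi :: "nat \<Rightarrow> 'o \<Rightarrow> ('f \<Rightarrow> 'v) \<Rightarrow> 'y \<Rightarrow> ('f,'v) steps \<Rightarrow> real" where
  "phi t xo x y h = measure_pmf.expectation (gen piA x xo (T - t) h) (\<lambda>tr'. cost xo tr' y)"

lemma kap_nonneg: "kap xo h a \<ge> 0"
  unfolding kap_def by (intro sum_nonneg mult_nonneg_nonneg pp_nonneg) auto

lemma delta_collapse:
  assumes "length h = t - 1"
  shows "(\<Sum>xo'\<in>UNIV. \<Sum>h'\<in>{h. length h = t - 1}. \<Sum>a'\<in>UNIV.
     (\<Sum>r\<in>UNIV. pmf (piB xo') r * pp (piSimB r) xo' h' * pmf (piSimB r xo' h') a' *
        (if xo' = xo \<and> h' = h \<and> a' = a then 1 else 0)) * W xo' h' a') = kap xo h a * W xo h a"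
proof -
  have eq: "(\<Sum>r\<in>UNIV. pmf (piB xo') r * pp (piSimB r) xo' h' * pmf (piSimB r xo' h') a' *
        (if xo' = xo \<and> h' = h \<and> a' = a then 1 else 0)) * W xo' h' a'
      = (if a' = a then if h' = h then if xo' = xo then kap xo h a * W xo h a else 0 else 0 else 0)" for xo' h' a'
    by (cases "xo' = xo \<and> h' = h \<and> a' = a") (auto simp: kap_def)
  show ?thesis using assms by (simp only: eq) (simp add: sum.delta sum.delta' finite_L)
qed

lemma Pevent:
  assumes t1: "1 \<le> t" and t: "t \<le> T" and h: "length h = t - 1"
  shows "measure_pmf.prob D (prefix_event t xo h a) = kap xo h a * Z xo h"
proof -
  have "measure_pmf.prob D (prefix_event t xo h a) = measure_pmf.expectation D (indicator (prefix_event t xo h a))"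
    by simp
  also have "\<dots> = (\<Sum>xo'\<in>UNIV. \<Sum>h'\<in>{h. length h = t - 1}. \<Sum>a'\<in>UNIV.
     (\<Sum>r\<in>UNIV. pmf (piB xo') r * pp (piSimB r) xo' h' * pmf (piSimB r xo' h') a' *
        (if xo' = xo \<and> h' = h \<and> a' = a then 1 else 0)) * N xo' h' (\<lambda>_. 1))"
    by (rule CIS[OF t1 t]) (auto simp: prefix_event_def indicator_def)
  also have "\<dots> = kap xo h a * N xo h (\<lambda>_. 1)" by (rule delta_collapse[OF h])
  also have "\<dots> = kap xo h a * Z xo h" by (simp add: Z_def)
  finally show ?thesis .
qed

lemma Qclosed:
  assumes t1: "1 \<le> t" and t: "t \<le> T" and h: "length h = t - 1"
    and pos: "measure_pmf.prob D (prefix_event t xo h a) > 0"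
  shows "Z xo h * Q_true pXY piB piSimB piA cost T t xo h a = N xo h (\<lambda>xy. phi t xo (fst xy) (snd xy) (h @ [(a, reveal (fst xy) a)]))"
proof -
  let ?E = "prefix_event t xo h a"
  let ?N = "N xo h (\<lambda>xy. phi t xo (fst xy) (snd xy) (h @ [(a, reveal (fst xy) a)]))"
  have P: "measure_pmf.prob D ?E = kap xo h a * Z xo h" by (rule Pevent[OF t1 t h])
  have "Q_true pXY piB piSimB piA cost T t xo h a =
    measure_pmf.expectation D (\<lambda>w. indicator ?E w * (case w of ((xo', x, y, r), tr) \<Rightarrow> phi t xo x y (h @ [(a, reveal x a)]))) / measure_pmf.prob D ?E"
    unfolding Q_true_def by (subst cond_expect[OF D_finite pos]) (simp add: phi_def split_def)
  also have "measure_pmf.expectation D (\<lambda>w. indicator ?E w * (case w of ((xo', x, y, r), tr) \<Rightarrow> phi t xo x y (h @ [(a, reveal x a)])))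
     = (\<Sum>xo'\<in>UNIV. \<Sum>h'\<in>{h. length h = t - 1}. \<Sum>a'\<in>UNIV.
     (\<Sum>r\<in>UNIV. pmf (piB xo') r * pp (piSimB r) xo' h' * pmf (piSimB r xo' h') a' *
        (if xo' = xo \<and> h' = h \<and> a' = a then 1 else 0)) * N xo' h' (\<lambda>xy. phi t xo (fst xy) (snd xy) (h @ [(a, reveal (fst xy) a)])))"
    by (rule CIS[OF t1 t]) (auto simp: prefix_event_def indicator_def)
  also have "\<dots> = kap xo h a * ?N" by (rule delta_collapse[OF h])
  finally have "Q_true pXY piB piSimB piA cost T t xo h a = kap xo h a * ?N / (kap xo h a * Z xo h)" by (simp add: P)
  moreover have nz: "kap xo h a * Z xo h \<noteq> 0" using pos P by (metis less_irrefl)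
  moreover have "kap xo h a \<noteq> 0" "Z xo h \<noteq> 0" using nz by auto
  ultimately show ?thesis by (simp add: field_simps)
qed


lemma EXT0:
  assumes xy: "(xo, x, y) \<in> set_pmf pXY" and c: "consist x h" and l: "length h = t" and t: "t \<le> T"
    and p: "pp piA xo h > 0"
  shows "\<exists>r\<in>set_pmf (piB xo). acquired h \<subseteq> r"
proof -
  have "h \<in> set_pmf (gen piA x xo t [])" by (rule gen_in_supp[OF l c p])
  also have "gen piA x xo t [] = map_pmf (take t) (gen piA x xo T [])" by (rule gen_marg[OF t, symmetric])
  finally obtain tr where tr: "tr \<in> set_pmf (gen piA x xo T [])" and h: "h = take t tr" by auto
  have "measure_pmf.prob (piB xo) {r. acquired tr \<subseteq> r} > 0"
    using semi_offline_pos xy tr by blast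
  hence "set_pmf (piB xo) \<inter> {r. acquired tr \<subseteq> r} \<noteq> {}"
    using measure_pmf_zero_iff[of "piB xo" "{r. acquired tr \<subseteq> r}"] by auto
  then obtain r where r: "r \<in> set_pmf (piB xo)" "acquired tr \<subseteq> r" by auto
  have "acquired h \<subseteq> acquired tr" unfolding h acquired_def using set_take_subset[of t tr] by auto
  thus ?thesis using r by auto
qed

lemma simB_pos: "pmf (piA xo h) a > 0 \<Longrightarrow> allowed r a \<Longrightarrow> pmf (piSimB r xo h) a > 0"
  using offpolicy_pos blocked_pos by blast

lemma pp_factor_pos:
  assumes "pp pol xo h > 0" "\<tau> < length h"
  shows "pmf (pol xo (take \<tau> h)) (fst (h ! \<tau>)) > 0"
proof -
  have "pmf (pol xo (take \<tau> h)) (fst (h ! \<tau>)) \<noteq> 0"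
  proof
    assume "pmf (pol xo (take \<tau> h)) (fst (h ! \<tau>)) = 0"
    hence "pp pol xo h = 0" unfolding pp_def using assms(2) by (intro prod_zero) auto
    thus False using assms(1) by simp
  qed
  thus ?thesis by (simp add: order_less_le)
qed

lemma allowed_acq: "\<tau> < length h \<Longrightarrow> acquired h \<subseteq> r \<Longrightarrow> allowed r (fst (h ! \<tau>))"
  unfolding allowed_def acquired_def
  by (cases "fst (h ! \<tau>)") (auto intro!: image_eqI[of _ fst "h ! \<tau>"])

lemma pp_simB_pos:
  assumes "pp piA xo h > 0" "acquired h \<subseteq> r"
  shows "pp (piSimB r) xo h > 0"
  unfolding pp_def
  by (intro prod_pos simB_pos pp_factor_pos[OF assms(1)] allowed_acq[OF _ assms(2)]) auto

lemma POS:
  assumes xy: "(xo, x, y) \<in> set_pmf pXY" and c: "consist x h" and l: "length h = t" and t: "t < T"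
    and p: "pp piA xo h > 0" and a: "pmf (piA xo h) a > 0"
  shows "kap xo h a > 0"
proof -
  let ?h = "h @ [(a, reveal x a)]"
  have c': "consist x ?h" using c by (simp add: consist_snoc)
  have p': "pp piA xo ?h > 0" using p a by (simp add: pp_snoc)
  obtain r where r: "r \<in> set_pmf (piB xo)" "acquired ?h \<subseteq> r"
    using EXT0[OF xy c' _ _ p', of "Suc t"] l t by auto
  have ah: "acquired h \<subseteq> r" using r(2) unfolding acquired_def by auto
  have al: "allowed r a" using r(2) unfolding acquired_def allowed_def by (cases a) auto
  have tm: "pmf (piB xo) r * pp (piSimB r) xo h * pmf (piSimB r xo h) a > 0"
    using r(1) pp_simB_pos[OF p ah] simB_pos[OF a al] by (simp add: pmf_positive)
  have "pmf (piB xo) r * pp (piSimB r) xo h * pmf (piSimB r xo h) a \<le> kap xo h a"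
    unfolding kap_def by (rule member_le_sum) (auto intro!: mult_nonneg_nonneg pp_nonneg)
  thus ?thesis using tm by linarith
qed

abbreviation "rh \<equiv> rho piA piSimB piBhat"

lemma rho_take: "rh r xo tr t = rh r xo (take t tr) t"
  unfolding rho_def by (auto simp: min_def intro!: prod.cong)

lemma rho_snoc:
  assumes "length h = t - 1" "1 \<le> t"
  shows "rh r xo (h @ [(a, v)]) t = rh r xo (h @ [(a, None)]) t"
proof -
  have "acquired (take t (h @ [(a, v)])) = acquired (take t (h @ [(a, None)]))"
    using assms by (simp add: acquired_def)
  moreover have "(\<Prod>\<tau><t. pmf (piA xo (take \<tau> (h @ [(a, v)]))) (fst ((h @ [(a, v)]) ! \<tau>))
                 / pmf (piSimB r xo (take \<tau> (h @ [(a, v)]))) (fst ((h @ [(a, v)]) ! \<tau>))) =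
        (\<Prod>\<tau><t. pmf (piA xo (take \<tau> (h @ [(a, None)]))) (fst ((h @ [(a, None)]) ! \<tau>))
                 / pmf (piSimB r xo (take \<tau> (h @ [(a, None)]))) (fst ((h @ [(a, None)]) ! \<tau>)))"
    using assms by (intro prod.cong refl) (auto simp: nth_append take_append)
  ultimately show ?thesis unfolding rho_def by simp
qed

definition Frho :: "nat \<Rightarrow> 'o \<Rightarrow> 'f set \<Rightarrow> ('f,'v) steps \<Rightarrow> 'f option \<Rightarrow> real" where
  "Frho t xo r h a = rh r xo (h @ [(a, None)]) t"

lemma rho_split:
  assumes "1 \<le> t" "t \<le> length tr"
  shows "rh r xo tr t = Frho t xo r (take (t - 1) tr) (fst (tr ! (t - 1)))"
proof -
  have tk: "take t tr = take (t - 1) tr @ [tr ! (t - 1)]"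
    using assms by (metis Suc_diff_1 Suc_le_lessD le_less_trans less_numeral_extra(1) order_less_le take_Suc_conv_app_nth)
  have "rh r xo tr t = rh r xo (take (t - 1) tr @ [(fst (tr ! (t - 1)), snd (tr ! (t - 1)))]) t"
    using tk rho_take[of r xo tr t] by simp
  also have "\<dots> = Frho t xo r (take (t - 1) tr) (fst (tr ! (t - 1)))"
    unfolding Frho_def using assms by (intro rho_snoc) auto
  finally show ?thesis .
qed

lemma rho_nz:
  assumes "rh r xo h t \<noteq> 0" "length h = t"
  shows "pp piA xo h > 0"
proof (cases "t = 0")
  case True thus ?thesis using assms by simp
next
  case False
  hence "(\<Prod>\<tau><t. pmf (piA xo (take \<tau> h)) (fst (h ! \<tau>)) / pmf (piSimB r xo (take \<tau> h)) (fst (h ! \<tau>))) \<noteq> 0"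
    using assms(1) unfolding rho_def by auto
  hence "\<forall>\<tau><t. pmf (piA xo (take \<tau> h)) (fst (h ! \<tau>)) \<noteq> 0" by (auto simp: prod_zero_iff)
  thus ?thesis unfolding pp_def using assms(2) by (intro prod_pos) (auto simp: order_less_le)
qed


lemma IS_core:
  assumes PB: "\<forall>xo s. piBhat xo s = measure_pmf.prob (piB xo) {r. s \<subseteq> r}" and l: "length h = t"
  shows "wt (piSimB r) x xo h * rh r xo h t = wt piA x xo h * (if acquired h \<subseteq> r then 1 else 0) / piBhat xo (acquired h)"
proof (cases "t = 0")
  case True
  hence "h = []" using l by simp
  moreover have "piBhat xo {} = 1" using PB by simp
  ultimately show ?thesis using True by (simp add: rho_def wt_def acquired_def)
next
  case t: False
  show ?thesis
  proof (cases "consist x h \<and> acquired h \<subseteq> r")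
    case False
    thus ?thesis using t l by (auto simp: wt_def rho_def)
  next
    case True
    have fac: "pmf (piSimB r xo (take \<tau> h)) (fst (h ! \<tau>)) * (pmf (piA xo (take \<tau> h)) (fst (h ! \<tau>)) / pmf (piSimB r xo (take \<tau> h)) (fst (h ! \<tau>)))
        = pmf (piA xo (take \<tau> h)) (fst (h ! \<tau>))" if "\<tau> \<in> {..<t}" for \<tau>
    proof (cases "pmf (piSimB r xo (take \<tau> h)) (fst (h ! \<tau>)) = 0")
      case z: True
      have "\<not> pmf (piA xo (take \<tau> h)) (fst (h ! \<tau>)) > 0"
        using z simB_pos[OF _ allowed_acq[of \<tau> h r]] True that l by fastforce
      thus ?thesis using z by (simp add: order_less_le)
    qed simp
    have "pp (piSimB r) xo h * (\<Prod>\<tau><t. pmf (piA xo (take \<tau> h)) (fst (h ! \<tau>)) / pmf (piSimB r xo (take \<tau> h)) (fst (h ! \<tau>)))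
        = (\<Prod>\<tau><t. pmf (piSimB r xo (take \<tau> h)) (fst (h ! \<tau>)) * (pmf (piA xo (take \<tau> h)) (fst (h ! \<tau>)) / pmf (piSimB r xo (take \<tau> h)) (fst (h ! \<tau>))))"
      unfolding pp_def l by (rule prod.distrib[symmetric])
    also have "\<dots> = pp piA xo h" unfolding pp_def l by (rule prod.cong[OF refl fac])
    finally show ?thesis using True t l by (simp add: wt_def rho_def)
  qed
qed

lemma prob_sup: "measure_pmf.prob (piB xo) {r. s \<subseteq> r} = (\<Sum>r\<in>UNIV. pmf (piB xo) r * (if s \<subseteq> r then 1 else 0))"
  by (subst prob_finite_type) simp

lemma IS:
  assumes PB: "\<forall>xo s. piBhat xo s = measure_pmf.prob (piB xo) {r. s \<subseteq> r}" and t: "t \<le> T"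
    and F: "\<And>xo x y r tr. length tr = T \<Longrightarrow> F ((xo, x, y, r), tr) = rh r xo tr t * g xo x y (take t tr)"
  shows "measure_pmf.expectation D F = (\<Sum>xo\<in>UNIV. \<Sum>xy\<in>UNIV. pmf pXY (xo, xy) *
            measure_pmf.expectation (gen piA (fst xy) xo t []) (g xo (fst xy) (snd xy)))"
proof -
  have "measure_pmf.expectation D F = (\<Sum>xo\<in>UNIV. \<Sum>xy\<in>UNIV. \<Sum>r\<in>UNIV. pmf pXY (xo, xy) * pmf (piB xo) r *
      measure_pmf.expectation (gen (piSimB r) (fst xy) xo t []) (\<lambda>h. rh r xo h t * g xo (fst xy) (snd xy) h))"
    by (rule ED_lvl[OF t]) (simp add: F rho_take[symmetric])
  also have "\<dots> = (\<Sum>xo\<in>UNIV. \<Sum>xy\<in>UNIV. pmf pXY (xo, xy) *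
            measure_pmf.expectation (gen piA (fst xy) xo t []) (g xo (fst xy) (snd xy)))"
  proof (intro sum.cong refl)
    fix xo :: 'o and xy :: "('f \<Rightarrow> 'v) \<times> 'y"
    obtain x y where xy: "xy = (x, y)" by (cases xy)
    have "(\<Sum>r\<in>UNIV. pmf pXY (xo, xy) * pmf (piB xo) r *
      measure_pmf.expectation (gen (piSimB r) x xo t []) (\<lambda>h. rh r xo h t * g xo x y h))
      = pmf pXY (xo, xy) * (\<Sum>h\<in>{h. length h = t}. wt piA x xo h * g xo x y h *
          ((\<Sum>r\<in>UNIV. pmf (piB xo) r * (if acquired h \<subseteq> r then 1 else 0)) / piBhat xo (acquired h)))"
    proof -
      have "(\<Sum>r\<in>UNIV. pmf pXY (xo, xy) * pmf (piB xo) r *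
        measure_pmf.expectation (gen (piSimB r) x xo t []) (\<lambda>h. rh r xo h t * g xo x y h))
        = pmf pXY (xo, xy) * (\<Sum>r\<in>UNIV. \<Sum>h\<in>{h. length h = t}. pmf (piB xo) r * ((wt (piSimB r) x xo h * rh r xo h t) * g xo x y h))"
        by (simp add: gen_expect sum_distrib_left mult_ac)
      also have "\<dots> = pmf pXY (xo, xy) * (\<Sum>r\<in>UNIV. \<Sum>h\<in>{h. length h = t}. pmf (piB xo) r *
           ((wt piA x xo h * (if acquired h \<subseteq> r then 1 else 0) / piBhat xo (acquired h)) * g xo x y h))"
        by (intro arg_cong2[where f = "(*)"] refl sum.cong) (auto simp: IS_core[OF PB])
      also have "\<dots> = pmf pXY (xo, xy) * (\<Sum>h\<in>{h. length h = t}. wt piA x xo h * g xo x y h *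
          ((\<Sum>r\<in>UNIV. pmf (piB xo) r * (if acquired h \<subseteq> r then 1 else 0)) / piBhat xo (acquired h)))"
        by (subst sum.swap, intro arg_cong2[where f="(*)"] refl sum.cong) (simp add: sum_distrib_left sum_divide_distrib mult_ac)
      finally show ?thesis .
    qed
    also have "\<dots> = pmf pXY (xo, xy) * (\<Sum>h\<in>{h. length h = t}. wt piA x xo h * g xo x y h)"
    proof (cases "pmf pXY (xo, xy) = 0")
      case False
      hence xyin: "(xo, x, y) \<in> set_pmf pXY" using xy by (simp add: set_pmf_iff)
      have "(\<Sum>h\<in>{h. length h = t}. wt piA x xo h * g xo x y h *
          ((\<Sum>r\<in>UNIV. pmf (piB xo) r * (if acquired h \<subseteq> r then 1 else 0)) / piBhat xo (acquired h)))
          = (\<Sum>h\<in>{h. length h = t}. wt piA x xo h * g xo x y h)"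
      proof (intro sum.cong refl)
        fix h assume h: "h \<in> {h :: ('f,'v) steps. length h = t}"
        show "wt piA x xo h * g xo x y h *
          ((\<Sum>r\<in>UNIV. pmf (piB xo) r * (if acquired h \<subseteq> r then 1 else 0)) / piBhat xo (acquired h))
          = wt piA x xo h * g xo x y h"
        proof (cases "wt piA x xo h = 0")
          case False
          hence c: "consist x h" and p: "pp piA xo h > 0"
            using pp_nonneg[of piA xo h] by (auto simp: wt_def order_less_le split: if_splits)
          obtain r where "r \<in> set_pmf (piB xo)" "acquired h \<subseteq> r" using EXT0[OF xyin c _ t p] h by auto
          hence "measure_pmf.prob (piB xo) {r. acquired h \<subseteq> r} \<noteq> 0"
            using measure_pmf_zero_iff[of "piB xo" "{r. acquired h \<subseteq> r}"] by auto
          thus ?thesis using PB by (simp add: prob_sup)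
        qed simp
      qed
      thus ?thesis by simp
    qed simp
    finally show "(\<Sum>r\<in>UNIV. pmf pXY (xo, xy) * pmf (piB xo) r *
      measure_pmf.expectation (gen (piSimB r) (fst xy) xo t []) (\<lambda>h. rh r xo h t * g xo (fst xy) (snd xy) h))
      = pmf pXY (xo, xy) * measure_pmf.expectation (gen piA (fst xy) xo t []) (g xo (fst xy) (snd xy))"
      by (simp add: xy gen_expect mult_ac)
  qed
  finally show ?thesis .
qed

lemma J_eq: "online_J pXY piA cost T = (\<Sum>xo\<in>UNIV. \<Sum>xy\<in>UNIV. pmf pXY (xo, xy) *
     measure_pmf.expectation (gen piA (fst xy) xo T []) (\<lambda>tr. cost xo tr (snd xy)))"
  unfolding online_J_def
  by (subst pmf_expectation_bind[of UNIV]) (auto simp: gen_finite split_def sum_pair_UNIV)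


lemma kap_zero:
  assumes "kap xo h a = 0"
  shows "(\<Sum>r\<in>UNIV. pmf (piB xo) r * pp (piSimB r) xo h * pmf (piSimB r xo h) a * G r) = 0"
proof -
  have "\<forall>r\<in>UNIV. pmf (piB xo) r * pp (piSimB r) xo h * pmf (piSimB r xo h) a = 0"
    using assms sum_nonneg_eq_0_iff[of UNIV "\<lambda>r. pmf (piB xo) r * pp (piSimB r) xo h * pmf (piSimB r xo h) a"]
    unfolding kap_def by (simp add: pp_nonneg)
  thus ?thesis by (intro sum.neutral) simp
qed

lemma CIS_Q:
  assumes QG: "\<forall>t\<in>{1..T}. \<forall>xo h a. measure_pmf.prob D (prefix_event t xo h a) > 0
             \<longrightarrow> Qt t xo h a = Q_true pXY piB piSimB piA cost T t xo h a"
    and t1: "1 \<le> t" and t: "t \<le> T"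
  shows "measure_pmf.expectation D (\<lambda>w. case w of ((xo, x, y, r), tr) \<Rightarrow> rh r xo tr t * Qt t xo (take (t - 1) tr) (fst (tr ! (t - 1))))
       = measure_pmf.expectation D (\<lambda>w. case w of ((xo, x, y, r), tr) \<Rightarrow> rh r xo tr t * phi t xo x y (take t tr))"
proof -
  let ?B = "\<lambda>xo h a. (\<Sum>r\<in>UNIV. pmf (piB xo) r * pp (piSimB r) xo h * pmf (piSimB r xo h) a * Frho t xo r h a)"
  have "measure_pmf.expectation D (\<lambda>w. case w of ((xo, x, y, r), tr) \<Rightarrow> rh r xo tr t * Qt t xo (take (t - 1) tr) (fst (tr ! (t - 1))))
      = (\<Sum>xo\<in>UNIV. \<Sum>h\<in>{h. length h = t - 1}. \<Sum>a\<in>UNIV. ?B xo h a *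
          N xo h (\<lambda>xy. Qt t xo (take (t - 1) (h @ [(a, reveal (fst xy) a)])) (fst ((h @ [(a, reveal (fst xy) a)]) ! (t - 1)))))"
    by (rule CIS[OF t1 t]) (use t1 t in \<open>simp add: rho_split min_def\<close>)
  also have "\<dots> = (\<Sum>xo\<in>UNIV. \<Sum>h\<in>{h. length h = t - 1}. \<Sum>a\<in>UNIV. ?B xo h a * (Z xo h * Qt t xo h a))"
    by (intro sum.cong refl) (simp add: nth_append N_const)
  also have "\<dots> = (\<Sum>xo\<in>UNIV. \<Sum>h\<in>{h. length h = t - 1}. \<Sum>a\<in>UNIV. ?B xo h a *
          N xo h (\<lambda>xy. phi t xo (fst xy) (snd xy) (h @ [(a, reveal (fst xy) a)])))"
  proof (intro sum.cong refl)
    fix xo h a assume h: "h \<in> {h :: ('f,'v) steps. length h = t - 1}"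
    show "?B xo h a * (Z xo h * Qt t xo h a) = ?B xo h a * N xo h (\<lambda>xy. phi t xo (fst xy) (snd xy) (h @ [(a, reveal (fst xy) a)]))"
    proof (cases "kap xo h a = 0 \<or> Z xo h = 0")
      case True
      thus ?thesis using kap_zero[of xo h a] Z_zero[of xo h] by auto
    next
      case False
      hence "kap xo h a * Z xo h > 0" using kap_nonneg[of xo h a] Z_nonneg[of xo h] by (simp add: order_less_le)
      hence pos: "measure_pmf.prob D (prefix_event t xo h a) > 0" using Pevent[OF t1 t] h by simp
      hence "Qt t xo h a = Q_true pXY piB piSimB piA cost T t xo h a" using QG t1 t by auto
      thus ?thesis using Qclosed[OF t1 t _ pos] h by simp
    qed
  qed
  also have "\<dots> = measure_pmf.expectation D (\<lambda>w. case w of ((xo, x, y, r), tr) \<Rightarrow> rh r xo tr t * phi t xo x y (take t tr))"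
    by (rule CIS[OF t1 t, symmetric]) (use t1 t in \<open>simp add: rho_split\<close>)
  finally show ?thesis .
qed

lemma phi_step:
  assumes "t < T"
  shows "phi t xo x y h = (\<Sum>a\<in>UNIV. pmf (piA xo h) a * phi (Suc t) xo x y (h @ [(a, reveal x a)]))"
proof -
  have "T - t = Suc (T - Suc t)" using assms by simp
  thus ?thesis unfolding phi_def
    by (simp, subst pmf_expectation_bind[of UNIV]) (auto simp: gen_finite)
qed

lemma N_sum: "N xo h (\<lambda>xy. \<Sum>a\<in>UNIV. c a * f a xy) = (\<Sum>a\<in>UNIV. c a * N xo h (f a))"
  unfolding N_def sum_distrib_left by (subst sum.swap) (simp add: mult_ac)

lemma Vlemma:
  assumes QG: "\<forall>t\<in>{1..T}. \<forall>xo h a. measure_pmf.prob D (prefix_event t xo h a) > 0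
             \<longrightarrow> Qt t xo h a = Q_true pXY piB piSimB piA cost T t xo h a"
    and t: "t < T"
    and HG: "\<And>xo r h. length h = t \<Longrightarrow> G xo r h \<noteq> 0 \<Longrightarrow> pp piA xo h > 0"
  shows "measure_pmf.expectation D (\<lambda>w. case w of ((xo, x, y, r), tr) \<Rightarrow> G xo r (take t tr) * Vtilde Qt piA (Suc t) xo (take t tr))
       = measure_pmf.expectation D (\<lambda>w. case w of ((xo, x, y, r), tr) \<Rightarrow> G xo r (take t tr) * phi t xo x y (take t tr))"
proof -
  let ?B = "\<lambda>xo h. (\<Sum>r\<in>UNIV. pmf (piB xo) r * pp (piSimB r) xo h * G xo r h)"
  have tT: "t \<le> T" using t by simp
  have "measure_pmf.expectation D (\<lambda>w. case w of ((xo, x, y, r), tr) \<Rightarrow> G xo r (take t tr) * Vtilde Qt piA (Suc t) xo (take t tr))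
     = (\<Sum>xo\<in>UNIV. \<Sum>h\<in>{h. length h = t}. ?B xo h * N xo h (\<lambda>xy. Vtilde Qt piA (Suc t) xo h))"
    by (rule LV[OF tT]) simp
  also have "\<dots> = (\<Sum>xo\<in>UNIV. \<Sum>h\<in>{h. length h = t}. ?B xo h * N xo h (\<lambda>xy. phi t xo (fst xy) (snd xy) h))"
  proof (intro sum.cong refl)
    fix xo h assume h: "h \<in> {h :: ('f,'v) steps. length h = t}"
    show "?B xo h * N xo h (\<lambda>xy. Vtilde Qt piA (Suc t) xo h) = ?B xo h * N xo h (\<lambda>xy. phi t xo (fst xy) (snd xy) h)"
    proof (cases "?B xo h = 0")
      case Bnz: False
      then obtain r where "G xo r h \<noteq> 0" by (metis (no_types, lifting) mult_zero_right sum.neutral)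
      hence ppA: "pp piA xo h > 0" using HG h by auto
      have "N xo h (\<lambda>xy. Vtilde Qt piA (Suc t) xo h) = (\<Sum>a\<in>UNIV. pmf (piA xo h) a * (Z xo h * Qt (Suc t) xo h a))"
        by (simp add: N_const Vtilde_def sum_distrib_left mult_ac)
      also have "\<dots> = (\<Sum>a\<in>UNIV. pmf (piA xo h) a * N xo h (\<lambda>xy. phi (Suc t) xo (fst xy) (snd xy) (h @ [(a, reveal (fst xy) a)])))"
      proof (intro sum.cong refl)
        fix a
        show "pmf (piA xo h) a * (Z xo h * Qt (Suc t) xo h a) =
              pmf (piA xo h) a * N xo h (\<lambda>xy. phi (Suc t) xo (fst xy) (snd xy) (h @ [(a, reveal (fst xy) a)]))"
        proof (cases "pmf (piA xo h) a = 0 \<or> Z xo h = 0")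
          case True thus ?thesis using Z_zero[of xo h] by auto
        next
          case False
          hence pa: "pmf (piA xo h) a > 0" and Znz: "Z xo h \<noteq> 0" by (auto simp: order_less_le)
          then obtain xy where "pmf pXY (xo, xy) * (if consist (fst xy) h then 1 else 0) \<noteq> 0"
            unfolding Z_def N_def by (metis (no_types, lifting) mult.right_neutral sum.neutral)
          hence xyin: "(xo, fst xy, snd xy) \<in> set_pmf pXY" and c: "consist (fst xy) h"
            by (auto simp: set_pmf_iff split: if_splits)
          have "kap xo h a > 0" by (rule POS[OF xyin c _ t ppA pa]) (use h in simp)
          hence "kap xo h a * Z xo h > 0" using Znz Z_nonneg[of xo h] by (simp add: order_less_le)
          hence pos: "measure_pmf.prob D (prefix_event (Suc t) xo h a) > 0"
            using Pevent[of "Suc t" h xo a] t h by simp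
          hence "Qt (Suc t) xo h a = Q_true pXY piB piSimB piA cost T (Suc t) xo h a" using QG t by auto
          thus ?thesis using Qclosed[of "Suc t" h xo a] pos t h by simp
        qed
      qed
      also have "\<dots> = N xo h (\<lambda>xy. phi t xo (fst xy) (snd xy) h)"
        by (simp add: phi_step[OF t] N_sum)
      finally show ?thesis by simp
    qed simp
  qed
  also have "\<dots> = measure_pmf.expectation D (\<lambda>w. case w of ((xo, x, y, r), tr) \<Rightarrow> G xo r (take t tr) * phi t xo x y (take t tr))"
    by (rule LV[OF tT, symmetric]) simp
  finally show ?thesis .
qed


definition XX where "XX w = (case w of ((xo, x, y, r), tr) \<Rightarrow> rh r xo tr T * cost xo tr y)"
definition YY where "YY t w = (case w of ((xo, x, y, r), tr) \<Rightarrow> rh r xo tr t * Qt t xo (take (t - 1) tr) (fst (tr ! (t - 1))))"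
definition ZZ where "ZZ t w = (case w of ((xo, x, y, r), tr) \<Rightarrow> rh r xo tr (t - 1) * Vtilde Qt piA t xo (take (t - 1) tr))"
definition CC where "CC t = measure_pmf.expectation D (\<lambda>w. case w of ((xo, x, y, r), tr) \<Rightarrow> rh r xo tr t * phi t xo x y (take t tr))"

lemma drl_decomp:
  "measure_pmf.expectation D (drl_summand piA piSimB piBhat Qt cost T) =
     measure_pmf.expectation D XX + (\<Sum>t\<in>{1..T}. measure_pmf.expectation D (ZZ t) - measure_pmf.expectation D (YY t))"
proof -
  have "drl_summand piA piSimB piBhat Qt cost T = (\<lambda>w. XX w + (\<Sum>t\<in>{1..T}. ZZ t w - YY t w))"
    by (auto simp: drl_summand_def XX_def YY_def ZZ_def fun_eq_iff split: prod.splits)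
  thus ?thesis by (simp add: Bochner_Integration.integral_sum)
qed

lemma case1:
  assumes PB: "\<forall>xo s. piBhat xo s = measure_pmf.prob (piB xo) {r. s \<subseteq> r}"
  shows "measure_pmf.expectation D (drl_summand piA piSimB piBhat Qt cost T) = online_J pXY piA cost T"
proof -
  have X: "measure_pmf.expectation D XX = online_J pXY piA cost T"
    unfolding J_eq by (rule IS[OF PB le_refl]) (simp add: XX_def)
  have YZ: "measure_pmf.expectation D (ZZ t) = measure_pmf.expectation D (YY t)" if t: "t \<in> {1..T}" for t
  proof -
    have t1: "1 \<le> t" and tT: "t \<le> T" using t by auto
    have "measure_pmf.expectation D (YY t) = (\<Sum>xo\<in>UNIV. \<Sum>xy\<in>UNIV. pmf pXY (xo, xy) *
            measure_pmf.expectation (gen piA (fst xy) xo t []) (\<lambda>h. Qt t xo (take (t - 1) h) (fst (h ! (t - 1)))))"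
      by (rule IS[OF PB tT]) (use t1 in \<open>simp add: YY_def min_def\<close>)
    also have "\<dots> = (\<Sum>xo\<in>UNIV. \<Sum>xy\<in>UNIV. pmf pXY (xo, xy) *
            measure_pmf.expectation (gen piA (fst xy) xo (t - 1) []) (\<lambda>h. Vtilde Qt piA t xo h))"
    proof (intro sum.cong refl arg_cong2[where f = "(*)"])
      fix xo xy
      obtain k where tk: "t = Suc k" using t1 by (cases t) auto
      have "measure_pmf.expectation (gen piA (fst xy) xo t []) (\<lambda>h. Qt t xo (take (t - 1) h) (fst (h ! (t - 1))))
          = measure_pmf.expectation (gen piA (fst xy) xo k []) (\<lambda>h. \<Sum>a\<in>UNIV. pmf (piA xo h) a *
               Qt t xo (take (t - 1) (h @ [(a, reveal (fst xy) a)])) (fst ((h @ [(a, reveal (fst xy) a)]) ! (t - 1))))"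
        unfolding tk by (rule gen_expect_Suc)
      also have "\<dots> = measure_pmf.expectation (gen piA (fst xy) xo k []) (\<lambda>h. Vtilde Qt piA t xo h)"
        by (intro integral_cong_AE AE_pmfI) (auto simp: tk Vtilde_def nth_append mult_ac dest!: gen_supp)
      finally show "measure_pmf.expectation (gen piA (fst xy) xo t []) (\<lambda>h. Qt t xo (take (t - 1) h) (fst (h ! (t - 1))))
          = measure_pmf.expectation (gen piA (fst xy) xo (t - 1) []) (\<lambda>h. Vtilde Qt piA t xo h)" by (simp add: tk)
    qed
    also have "\<dots> = measure_pmf.expectation D (ZZ t)"
      by (rule IS[OF PB, symmetric]) (use tT in \<open>simp_all add: ZZ_def rho_take[symmetric]\<close>)
    finally show ?thesis by simp
  qed
  show ?thesis unfolding drl_decomp X using YZ by simp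
qed

lemma telescope:
  fixes f :: "nat \<Rightarrow> real" and n :: nat
  shows "(\<Sum>t\<in>{1..n}. f (t - 1) - f t) + f n = f 0"
  by (induction n) (auto simp: sum.cl_ivl_Suc)

lemma case2:
  assumes QG: "\<forall>t\<in>{1..T}. \<forall>xo h a. measure_pmf.prob D (prefix_event t xo h a) > 0
             \<longrightarrow> Qt t xo h a = Q_true pXY piB piSimB piA cost T t xo h a"
  shows "measure_pmf.expectation D (drl_summand piA piSimB piBhat Qt cost T) = online_J pXY piA cost T"
proof -
  have X: "measure_pmf.expectation D XX = CC T"
    unfolding CC_def XX_def
    by (intro integral_cong_AE AE_pmfI) (auto simp: phi_def dest!: D_supp)
  have Y: "measure_pmf.expectation D (YY t) = CC t" if "t \<in> {1..T}" for t
    unfolding YY_def CC_def using that by (intro CIS_Q[OF QG]) auto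
  have Zt: "measure_pmf.expectation D (ZZ t) = CC (t - 1)" if t: "t \<in> {1..T}" for t
  proof -
    have tl: "t - 1 < T" and ts: "Suc (t - 1) = t" using t by auto
    have "measure_pmf.expectation D (ZZ t) = measure_pmf.expectation D (\<lambda>w. case w of ((xo, x, y, r), tr) \<Rightarrow>
            rh r xo (take (t - 1) tr) (t - 1) * Vtilde Qt piA (Suc (t - 1)) xo (take (t - 1) tr))"
      unfolding ZZ_def ts by (subst rho_take) (rule refl)
    also have "\<dots> = measure_pmf.expectation D (\<lambda>w. case w of ((xo, x, y, r), tr) \<Rightarrow>
            rh r xo (take (t - 1) tr) (t - 1) * phi (t - 1) xo x y (take (t - 1) tr))"
      by (rule Vlemma[OF QG tl, where G = "\<lambda>xo r h. rh r xo h (t - 1)"]) (rule rho_nz)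
    also have "\<dots> = CC (t - 1)" unfolding CC_def by (simp add: rho_take[symmetric])
    finally show ?thesis .
  qed
  have C0: "CC 0 = online_J pXY piA cost T"
  proof -
    have "CC 0 = (\<Sum>xo\<in>UNIV. \<Sum>xy\<in>UNIV. \<Sum>r\<in>UNIV. pmf pXY (xo, xy) * pmf (piB xo) r *
      measure_pmf.expectation (gen (piSimB r) (fst xy) xo 0 []) (\<lambda>h. phi 0 xo (fst xy) (snd xy) h))"
      unfolding CC_def by (rule ED_lvl) (simp_all add: rho_def)
    also have "\<dots> = (\<Sum>xo\<in>UNIV. \<Sum>xy\<in>UNIV. pmf pXY (xo, xy) * phi 0 xo (fst xy) (snd xy) [] * (\<Sum>r\<in>UNIV. pmf (piB xo) r))"
      by (simp add: sum_distrib_left sum_distrib_right mult_ac)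
    also have "\<dots> = online_J pXY piA cost T"
      unfolding J_eq by (simp add: sum_pmf_eq_1 phi_def)
    finally show ?thesis .
  qed
  have "measure_pmf.expectation D (drl_summand piA piSimB piBhat Qt cost T) = (\<Sum>t\<in>{1..T}. CC (t - 1) - CC t) + CC T"
    unfolding drl_decomp X using Y Zt by simp
  also have "\<dots> = CC 0" by (rule telescope)
  finally show ?thesis using C0 by simp
qed

end


lemma wlln_pmf:
  fixes D :: "'a pmf" and g :: "'a \<Rightarrow> real"
  assumes fin: "finite (set_pmf D)"
  shows "\<forall>\<epsilon>>0. (\<lambda>n. measure_pmf.prob (Pi_pmf {..<n} dflt (\<lambda>_. D))
            {\<omega>. \<bar>(\<Sum>i<n. g (\<omega> i)) / real n - measure_pmf.expectation D g\<bar> > \<epsilon>}) \<longlonglongrightarrow> 0"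
proof (intro allI impI)
  fix \<epsilon> :: real assume e: "\<epsilon> > 0"
  define B where "B = (\<Sum>x\<in>set_pmf D. \<bar>g x\<bar>) + 1"
  have gB: "x \<in> set_pmf D \<Longrightarrow> g x \<in> {-B..B}" for x
  proof -
    assume x: "x \<in> set_pmf D"
    have "\<bar>g x\<bar> \<le> (\<Sum>x\<in>set_pmf D. \<bar>g x\<bar>)"
      using fin x by (intro member_le_sum) auto
    thus ?thesis unfolding B_def by auto
  qed
  have "0 \<le> (\<Sum>x\<in>set_pmf D. \<bar>g x\<bar>)" by (intro sum_nonneg) auto
  hence Bpos: "-B < B" unfolding B_def by linarith
  have bound: "measure_pmf.prob (Pi_pmf {..<n} dflt (\<lambda>_. D))
            {\<omega>. \<bar>(\<Sum>i<n. g (\<omega> i)) / real n - measure_pmf.expectation D g\<bar> > \<epsilon>}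
          \<le> 2 * exp (-2 * real n * \<epsilon>\<^sup>2 / (B - (-B))\<^sup>2)" if n: "n > 0" for n
  proof -
    let ?M = "Pi_pmf {..<n} dflt (\<lambda>_. D)"
    interpret H: Hoeffding_ineq_iid "measure_pmf ?M" "{..<n}" "\<lambda>i \<omega>. g (\<omega> i)" "\<lambda>\<omega>. g (\<omega> 0)" "-B" B
      "measure_pmf.expectation ?M (\<lambda>\<omega>. g (\<omega> 0))"
    proof unfold_locales
      show "prob_space.indep_vars (measure_pmf ?M) (\<lambda>_. borel) (\<lambda>i \<omega>. g (\<omega> i)) {..<n}"
        by (intro prob_space.indep_vars_compose2[OF _ indep_vars_Pi_pmf])
           (auto simp: measure_pmf.prob_space_axioms)
    next
      fix i assume i: "i \<in> {..<n}"
      have eq: "distr (measure_pmf ?M) borel (\<lambda>\<omega>. g (\<omega> j)) = distr (measure_pmf D) borel g" if "j < n" for j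
      proof -
        have "distr (measure_pmf ?M) borel (\<lambda>\<omega>. g (\<omega> j)) = distr (measure_pmf (map_pmf (\<lambda>\<omega>. \<omega> j) ?M)) borel g"
          by (simp add: map_pmf_rep_eq distr_distr comp_def)
        also have "map_pmf (\<lambda>\<omega>. \<omega> j) ?M = D" using that by (simp add: Pi_pmf_component)
        finally show ?thesis .
      qed
      show "distr (measure_pmf ?M) borel (\<lambda>\<omega>. g (\<omega> i)) = distr (measure_pmf ?M) borel (\<lambda>\<omega>. g (\<omega> 0))"
        using eq[of i] eq[of 0] i n by simp
    next
      show "AE x in measure_pmf ?M. g (x 0) \<in> {-B..B}"
      proof (rule AE_pmfI)
        fix \<omega> assume "\<omega> \<in> set_pmf ?M"
        hence "\<omega> 0 \<in> set_pmf (map_pmf (\<lambda>\<omega>. \<omega> 0) ?M)" by auto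
        hence "\<omega> 0 \<in> set_pmf D" using n by (simp add: Pi_pmf_component)
        thus "g (\<omega> 0) \<in> {-B..B}" by (rule gB)
      qed
    qed auto
    have mu: "measure_pmf.expectation ?M (\<lambda>\<omega>. g (\<omega> 0)) = measure_pmf.expectation D g"
    proof -
      have "measure_pmf.expectation ?M (\<lambda>\<omega>. g (\<omega> 0)) = measure_pmf.expectation (map_pmf (\<lambda>\<omega>. \<omega> 0) ?M) g"
        by simp
      also have "map_pmf (\<lambda>\<omega>. \<omega> 0) ?M = D" using n by (simp add: Pi_pmf_component)
      finally show ?thesis .
    qed
    have "measure_pmf.prob ?M {\<omega>. \<bar>(\<Sum>i<n. g (\<omega> i)) / real n - measure_pmf.expectation D g\<bar> > \<epsilon>}
        \<le> measure_pmf.prob ?M {x\<in>space (measure_pmf ?M). \<bar>(\<Sum>i\<in>{..<n}. g (x i)) / real (card {..<n}) - measure_pmf.expectation ?M (\<lambda>\<omega>. g (\<omega> 0))\<bar> \<ge> \<epsilon>}"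
      by (intro measure_pmf.finite_measure_mono) (auto simp: mu)
    also have "\<dots> \<le> 2 * exp (-2 * real (card {..<n}) * \<epsilon>\<^sup>2 / (B - (-B))\<^sup>2)"
      by (rule H.Hoeffding_ineq_abs_ge') (use e Bpos n in auto)
    finally show ?thesis by simp
  qed
  have lim: "(\<lambda>n. 2 * exp (-2 * real n * \<epsilon>\<^sup>2 / (B - (-B))\<^sup>2)) \<longlonglongrightarrow> 0"
  proof -
    have c: "2 * \<epsilon>\<^sup>2 / (B - (-B))\<^sup>2 > 0" using e Bpos by auto
    have "(\<lambda>n. exp (- (2 * \<epsilon>\<^sup>2 / (B - (-B))\<^sup>2) * real n)) \<longlonglongrightarrow> 0"
    proof -
      have "(\<lambda>n. exp (- (2 * \<epsilon>\<^sup>2 / (B - (-B))\<^sup>2)) ^ n) \<longlonglongrightarrow> 0"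
        using c by (intro LIMSEQ_power_zero) auto
      thus ?thesis by (simp add: exp_of_nat_mult[symmetric] mult.commute)
    qed
    hence "(\<lambda>n. 2 * exp (- (2 * \<epsilon>\<^sup>2 / (B - (-B))\<^sup>2) * real n)) \<longlonglongrightarrow> 2 * 0"
      by (intro tendsto_mult tendsto_const)
    thus ?thesis by (simp add: field_simps)
  qed
  show "(\<lambda>n. measure_pmf.prob (Pi_pmf {..<n} dflt (\<lambda>_. D))
            {\<omega>. \<bar>(\<Sum>i<n. g (\<omega> i)) / real n - measure_pmf.expectation D g\<bar> > \<epsilon>}) \<longlonglongrightarrow> 0"
  proof (rule tendsto_sandwich[OF _ _ tendsto_const lim])
    show "\<forall>\<^sub>F n in sequentially. 0 \<le> measure_pmf.prob (Pi_pmf {..<n} dflt (\<lambda>_. D))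
            {\<omega>. \<bar>(\<Sum>i<n. g (\<omega> i)) / real n - measure_pmf.expectation D g\<bar> > \<epsilon>}" by simp
    show "\<forall>\<^sub>F n in sequentially. measure_pmf.prob (Pi_pmf {..<n} dflt (\<lambda>_. D))
            {\<omega>. \<bar>(\<Sum>i<n. g (\<omega> i)) / real n - measure_pmf.expectation D g\<bar> > \<epsilon>} \<le> 2 * exp (-2 * real n * \<epsilon>\<^sup>2 / (B - (-B))\<^sup>2)"
      using eventually_gt_at_top[of 0] by eventually_elim (rule bound)
  qed
qed


theorem theorem7:
  fixes pXY :: "('o::finite \<times> ('f::finite \<Rightarrow> 'v::finite) \<times> 'y::finite) pmf"
    and piB :: "'o \<Rightarrow> 'f set pmf"
    and piA piSim :: "'o \<Rightarrow> ('f,'v) steps \<Rightarrow> 'f option pmf"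
    and piSimB :: "'f set \<Rightarrow> 'o \<Rightarrow> ('f,'v) steps \<Rightarrow> 'f option pmf"
    and piBhat :: "'o \<Rightarrow> 'f set \<Rightarrow> real"
    and Qt :: "nat \<Rightarrow> 'o \<Rightarrow> ('f,'v) steps \<Rightarrow> 'f option \<Rightarrow> real"
    and cost :: "'o \<Rightarrow> ('f,'v) steps \<Rightarrow> 'y \<Rightarrow> real"
    and T :: nat
  assumes blocked: "\<forall>r xo h i. pmf (piSimB r xo h) (Some i) > 0 \<longrightarrow> i \<in> r"
    and blocked_pos: "\<forall>r xo h a. pmf (piSim xo h) a > 0 \<and> allowed r a \<longrightarrow> pmf (piSimB r xo h) a > 0"
    and offpolicy_pos: "\<forall>xo h a. pmf (piA xo h) a > 0 \<longrightarrow> pmf (piSim xo h) a > 0"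
    and semi_offline_pos: "\<forall>xo x y tr. (xo, x, y) \<in> set_pmf pXY \<and> tr \<in> set_pmf (gen piA x xo T [])
                 \<longrightarrow> measure_pmf.prob (piB xo) {r. acquired tr \<subseteq> r} > 0"
    and doubly: "(\<forall>xo s. piBhat xo s = measure_pmf.prob (piB xo) {r. s \<subseteq> r})
       \<or> (\<forall>t\<in>{1..T}. \<forall>xo h a.
             measure_pmf.prob (semi_dist pXY piB piSimB T) (prefix_event t xo h a) > 0
             \<longrightarrow> Qt t xo h a = Q_true pXY piB piSimB piA cost T t xo h a)"
  shows "\<forall>\<epsilon>>0. (\<lambda>n. measure_pmf.prob (Pi_pmf {..<n} undefined (\<lambda>_. semi_dist pXY piB piSimB T))
                    {\<omega>. \<bar>J_DRL piA piSimB piBhat Qt cost T n \<omega> - online_J pXY piA cost T\<bar> > \<epsilon>})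
              \<longlonglongrightarrow> 0"
proof -
  interpret drl_loc pXY piB piA piSim piSimB piBhat Qt cost T
    using blocked blocked_pos offpolicy_pos semi_offline_pos by (simp add: drl_loc_def)
  have E: "measure_pmf.expectation (semi_dist pXY piB piSimB T) (drl_summand piA piSimB piBhat Qt cost T)
      = online_J pXY piA cost T"
    using doubly case1 case2 by blast
  show ?thesis unfolding J_DRL_def E[symmetric] by (rule wlln_pmf[OF D_finite])
qed

end
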